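(* Consider the uncertain control affine system \[ \dot x = f(x) + g(x)u + \varphi(x,u)\theta,\qquad \varphi(x,u)=[F(x)\;\; G(x)\,\mathrm{diag}(u)]\in\mathbb{R}^{n\times(p+m)}, \] with state $x\in\mathbb{R}^n$, input $u\in\mathcal{U}\subseteq\mathbb{R}^m$, known locally Lipschitz $f,g$, known $F:\mathbb{R}^n\to\mathbb{R}^{n\times p}$, $G:\mathbb{R}^n\to\mathbb{R}^{n\times m}$, and unknown $\theta\in\mathbb{R}^{p+m}$ lying in a known hyperrectangle $\Theta=[\underline{\theta}_1,\overline{\theta}_1]\times\cdots\times[\underline{\theta}_{p+m},\overline{\theta}_{p+m}]$, written as $\Theta=\{\theta: A\theta\le b\}$ with $A\in\mathbb{R}^{2(p+m)\times(p+m)}$, $b\in\mathbb{R}^{2(p+m)}$. Assume $f(0)=0$ and $\varphi(0,0)=0$. Let $V:\mathbb{R}^n\to\mathbb{R}_{\ge0}$ be continuously differentiable and positive definite, $\mathcal{D}\subseteq\mathbb{R}^n$ contain the origin, and suppose there is a class $\mathcal{K}$ function $\gamma$ with \[ \inf_{u\in\mathcal{U}}\sup_{\theta\in\Theta}\big(L_fV(x)+L_gV(x)u+L_\varphi V(x,u)\theta\big)\le-\gamma(V(x))\quad\forall x\in\mathcal{D}, \] and that for each $x\in\mathcal{D}$ the set $K_{rclf}(x)=\{u\in\mathcal{U}\mid L_fV(x)+L_gV(x)u+\sup_{\theta\in\Theta}L_\varphi V(x,u)\theta\le-\gamma(V(x))\}$ is nonempty. For each $x$ consider the quadratic program in $u\in\mathcal{U}$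 and $\lambda\in\mathbb{R}^{2(p+m)}$: \[ \min_{u\in\mathcal{U},\,\lambda\ge0}\ \tfrac12\|u\|^2\quad\text{s.t.}\quad L_fV(x)+L_gV(x)u+b^\top\lambda\le-\gamma(V(x)),\qquad \lambda^\top A=L_\varphi V(x,u). \] Then any locally Lipschitz policy $u=k(x)$ given by (the $u$-component of) a solution of this program renders the origin asymptotically stable for the closed-loop system.
   Context: $L_fV(x)=\nabla V(x)f(x)$, $L_gV(x)=\nabla V(x)g(x)$, $L_\varphi V(x,u)=\nabla V(x)\varphi(x,u)\in\mathbb{R}^{1\times(p+m)}$. $\lambda\ge0$ is componentwise. A class $\mathcal{K}$ function is a continuous strictly increasing $\gamma:[0,\infty)\to[0,\infty)$ with $\gamma(0)=0$. *)

theory Defs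
  imports "HOL-Analysis.Analysis"
begin

definition loc_lipschitz_on :: "'a::metric_space set \<Rightarrow> ('a \<Rightarrow> 'b::metric_space) \<Rightarrow> bool" where
  "loc_lipschitz_on S h \<longleftrightarrow>
     (\<forall>x\<in>S. \<exists>e>0. \<exists>L. \<forall>y\<in>ball x e. \<forall>z\<in>ball x e. dist (h y) (h z) \<le> L * dist y z)"

definition class_K :: "(real \<Rightarrow> real) \<Rightarrow> bool" where
  "class_K \<gamma> \<longleftrightarrow> continuous_on {0..} \<gamma> \<and> strict_mono_on {0..} \<gamma> \<and> \<gamma> 0 = 0
                 \<and> (\<forall>s\<ge>0. \<gamma> s \<ge> 0)"

definition pos_def :: "('a::real_vector \<Rightarrow> real) \<Rightarrow> bool" where
  "pos_def V \<longleftrightarrow> V 0 = 0 \<and> (\<forall>x. x \<noteq> 0 \<longrightarrow> V x > 0)"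

text \<open>The regressor \<open>\<phi>(x,u) = [F(x)  G(x) diag(u)]\<close>, columns indexed by \<open>'p + 'm\<close>.\<close>
definition phi :: "(real^'n::finite \<Rightarrow> real^'p::finite^'n) \<Rightarrow> (real^'n \<Rightarrow> real^'m::finite^'n)
                    \<Rightarrow> real^'n \<Rightarrow> real^'m \<Rightarrow> real^('p + 'm)^'n" where
  "phi F G x u = (\<chi> i. \<chi> j. (case j of Inl a \<Rightarrow> F x $ i $ a | Inr c \<Rightarrow> G x $ i $ c * u $ c))"

definition is_sol :: "('a::real_normed_vector \<Rightarrow> 'a) \<Rightarrow> (real \<Rightarrow> 'a) \<Rightarrow> real set \<Rightarrow> bool" where
  "is_sol h x I \<longleftrightarrow> (\<forall>t\<in>I. (x has_vector_derivative h (x t)) (at t within I))"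

definition asymp_stable :: "('a::real_normed_vector \<Rightarrow> 'a) \<Rightarrow> bool" where
  "asymp_stable h \<longleftrightarrow>
     (\<forall>\<epsilon>>0. \<exists>\<delta>>0. \<forall>x T. T \<ge> 0 \<and> is_sol h x {0..T} \<and> norm (x 0) < \<delta>
                       \<longrightarrow> (\<forall>t\<in>{0..T}. norm (x t) < \<epsilon>))
   \<and> (\<exists>\<eta>>0. \<forall>x. is_sol h x {0..} \<and> norm (x 0) < \<eta> \<longrightarrow> (x \<longlongrightarrow> 0) at_top)"

end

theory Submission
  imports Defs
begin



lemma chain_V:
  fixes V :: "real^'n \<Rightarrow> real" and x :: "real \<Rightarrow> real^'n"
  assumes "\<forall>y. (V has_derivative (\<lambda>h. dV y \<bullet> h)) (at y)"
    and "(x has_vector_derivative x') (at t within I)"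
  shows "((\<lambda>s. V (x s)) has_real_derivative (dV (x t) \<bullet> x')) (at t within I)"
proof -
  have d1: "(x has_derivative (\<lambda>s. s *\<^sub>R x')) (at t within I)"
    using assms(2) by (simp add: has_vector_derivative_def)
  have d2: "(V has_derivative (\<lambda>h. dV (x t) \<bullet> h)) (at (x t) within x ` I)"
    using assms(1) has_derivative_at_withinI by blast
  have "((V \<circ> x) has_derivative ((\<lambda>h. dV (x t) \<bullet> h) \<circ> (\<lambda>s. s *\<^sub>R x'))) (at t within I)"
    by (rule diff_chain_within[OF d1 d2])
  moreover have "((\<lambda>h. dV (x t) \<bullet> h) \<circ> (\<lambda>s. s *\<^sub>R x')) = (*) (dV (x t) \<bullet> x')"
    by (auto simp: fun_eq_iff)
  ultimately show ?thesis
    by (simp add: has_field_derivative_def o_def)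
qed

lemma decr_bound:
  fixes v :: "real \<Rightarrow> real"
  assumes "a \<le> b" "continuous_on {a..b} v"
    and "\<And>t. a < t \<Longrightarrow> t < b \<Longrightarrow> (v has_real_derivative v' t) (at t)"
    and "\<And>t. a < t \<Longrightarrow> t < b \<Longrightarrow> v' t \<le> K"
  shows "v b - v a \<le> K * (b - a)"
proof (cases "a = b")
  case True then show ?thesis by simp
next
  case False
  then have "a < b" using assms(1) by simp
  from MVT[OF this assms(2)] obtain l z where lz: "a < z" "z < b" "DERIV v z :> l"
      "v b - v a = (b - a) * l"
    using assms(3) real_differentiable_def by blast
  have "l = v' z" using DERIV_unique[OF lz(3) assms(3)[OF lz(1,2)]] .
  then have "l \<le> K" using assms(4)[OF lz(1,2)] by simp
  then show ?thesis using lz(4) \<open>a < b\<close> by (simp add: mult.commute mult_right_mono)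
qed

lemma pos_lower:
  fixes V :: "real^'n \<Rightarrow> real"
  assumes "continuous_on UNIV V" "\<forall>y. y \<noteq> 0 \<longrightarrow> V y > 0" "0 < a"
  shows "\<exists>m>0. \<forall>y. a \<le> norm y \<and> norm y \<le> c \<longrightarrow> m \<le> V y"
proof -
  let ?S = "{y::real^'n. a \<le> norm y \<and> norm y \<le> c}"
  show ?thesis
  proof (cases "?S = {}")
    case True then show ?thesis by (intro exI[of _ 1]) auto
  next
    case False
    have "?S = cball 0 c - ball 0 a" by auto
    then have "compact ?S" by (simp add: compact_diff)
    from continuous_attains_inf[OF this False continuous_on_subset[OF assms(1)]]
    obtain y0 where y0: "y0 \<in> ?S" "\<forall>y\<in>?S. V y0 \<le> V y" by blast
    have "y0 \<noteq> 0" using y0(1) assms(3) by auto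
    then have "V y0 > 0" using assms(2) by auto
    then show ?thesis using y0 by (intro exI[of _ "V y0"]) auto
  qed
qed

lemma first_exit:
  fixes c :: "real \<Rightarrow> real"
  assumes "continuous_on {0..T} c" "c 0 < e" "t1 \<in> {0..T}" "e \<le> c t1"
  shows "\<exists>s\<in>{0..T}. c s = e \<and> (\<forall>\<tau>\<in>{0..<s}. c \<tau> < e)"
proof -
  let ?Z = "{t \<in> {0..T}. c t = e}"
  have "closed ?Z" by (rule continuous_closed_preimage_constant[OF assms(1)]) simp
  then have cZ: "compact ?Z" using compact_Int_closed[of "{0..T}" "?Z"] by (metis (no_types, lifting) compact_Icc Int_absorb1 mem_Collect_eq subsetI)
  have "0 \<le> t1" "t1 \<le> T" using assms(3) by auto
  from IVT'[of c 0 e t1] obtain t2 where "0 \<le> t2" "t2 \<le> t1" "c t2 = e"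
    using assms continuous_on_subset[OF assms(1), of "{0..t1}"] \<open>t1 \<le> T\<close> \<open>0 \<le> t1\<close> by force
  then have ne: "?Z \<noteq> {}" using \<open>t1 \<le> T\<close> by (metis (mono_tags, lifting) atLeastAtMost_iff empty_iff mem_Collect_eq order_trans)
  from compact_attains_inf[OF cZ ne] obtain s where s: "s \<in> ?Z" "\<forall>t\<in>?Z. s \<le> t" by blast
  have "\<forall>\<tau>\<in>{0..<s}. c \<tau> < e"
  proof (rule ccontr)
    assume "\<not> ?thesis"
    then obtain \<tau> where tau: "0 \<le> \<tau>" "\<tau> < s" "e \<le> c \<tau>" by force
    have "\<tau> \<le> T" using tau s by auto
    from IVT'[of c 0 e \<tau>] obtain t3 where "0 \<le> t3" "t3 \<le> \<tau>" "c t3 = e"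
      using assms(2) tau continuous_on_subset[OF assms(1), of "{0..\<tau>}"] \<open>\<tau> \<le> T\<close> by force
    then have "t3 \<in> ?Z" using \<open>\<tau> \<le> T\<close> by auto
    then show False using s(2) \<open>t3 \<le> \<tau>\<close> tau(2) by fastforce
  qed
  then show ?thesis using s by auto
qed

theorem theorem2:
  fixes f :: "real^'n \<Rightarrow> real^'n"
    and g :: "real^'n \<Rightarrow> real^'m^'n"
    and F :: "real^'n \<Rightarrow> real^'p^'n"
    and G :: "real^'n \<Rightarrow> real^'m^'n"
    and U :: "(real^'m) set"
    and \<theta>lo \<theta>hi :: "real^('p + 'm)"
    and A :: "real^('p + 'm)^'k" and b :: "real^'k"
    and V :: "real^'n \<Rightarrow> real" and dV :: "real^'n \<Rightarrow> real^'n"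
    and D :: "(real^'n) set"
    and \<gamma> :: "real \<Rightarrow> real"
    and k :: "real^'n \<Rightarrow> real^'m"
    and \<theta> :: "real^('p + 'm)"
  assumes f_lip: "loc_lipschitz_on UNIV f"
    and g_lip: "loc_lipschitz_on UNIV g"
    and box: "\<theta>lo \<le> \<theta>hi"
    and k_card: "CARD('k) = 2 * CARD('p + 'm)"
    and Theta_rep: "{th. \<forall>i. (A *v th) $ i \<le> b $ i} = cbox \<theta>lo \<theta>hi"
    and f0: "f 0 = 0"
    and phi0: "phi F G 0 0 = 0"
    and U0: "0 \<in> U"
    and V_nonneg: "\<forall>x. V x \<ge> 0"
    and V_pd: "pos_def V"
    and V_deriv: "\<forall>x. (V has_derivative (\<lambda>h. dV x \<bullet> h)) (at x)"
    and dV_cont: "continuous_on UNIV dV"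
    and D_open: "open D" and D0: "0 \<in> D"
    and gamma_K: "class_K \<gamma>"
    and rclf: "\<forall>x\<in>D.
        (INF u\<in>U. SUP th\<in>cbox \<theta>lo \<theta>hi.
            dV x \<bullet> f x + dV x \<bullet> (g x *v u) + (dV x v* phi F G x u) \<bullet> th) \<le> - \<gamma> (V x)"
    and K_nonempty: "\<forall>x\<in>D. {u\<in>U. dV x \<bullet> f x + dV x \<bullet> (g x *v u)
            + (SUP th\<in>cbox \<theta>lo \<theta>hi. (dV x v* phi F G x u) \<bullet> th) \<le> - \<gamma> (V x)} \<noteq> {}"
    and k_qp: "\<forall>x\<in>D. k x \<in> U
        \<and> (\<exists>lam::real^'k. (\<forall>i. lam $ i \<ge> 0)
              \<and> dV x \<bullet> f x + dV x \<bullet> (g x *v k x) + b \<bullet> lam \<le> - \<gamma> (V x)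
              \<and> lam v* A = dV x v* phi F G x (k x))
        \<and> (\<forall>u\<in>U. \<forall>lam::real^'k. ((\<forall>i. lam $ i \<ge> 0)
              \<and> dV x \<bullet> f x + dV x \<bullet> (g x *v u) + b \<bullet> lam \<le> - \<gamma> (V x)
              \<and> lam v* A = dV x v* phi F G x u)
              \<longrightarrow> (1/2) * (norm (k x))\<^sup>2 \<le> (1/2) * (norm u)\<^sup>2)"
    and k_lip: "loc_lipschitz_on D k"
    and theta_in: "\<theta> \<in> cbox \<theta>lo \<theta>hi"
  shows "asymp_stable (\<lambda>x. f x + g x *v k x + phi F G x (k x) *v \<theta>)"
  proof -
  define H where "H = (\<lambda>x. f x + g x *v k x + phi F G x (k x) *v \<theta>)"
  have contV: "continuous_on UNIV V"
    using V_deriv has_derivative_continuous continuous_at_imp_continuous_on by blast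
  have V00: "V 0 = 0" and Vpos: "\<forall>y. y \<noteq> 0 \<longrightarrow> V y > 0" using V_pd by (auto simp: pos_def_def)
  have thA: "\<forall>i. (A *v \<theta>) $ i \<le> b $ i" using theta_in Theta_rep by blast
  have L1: "dV y \<bullet> H y \<le> - \<gamma> (V y)" if "y \<in> D" for y
  proof -
    from k_qp that obtain lam :: "real^'k" where lam: "\<forall>i. lam $ i \<ge> 0"
      "dV y \<bullet> f y + dV y \<bullet> (g y *v k y) + b \<bullet> lam \<le> - \<gamma> (V y)"
      "lam v* A = dV y v* phi F G y (k y)" by blast
    have "dV y \<bullet> (phi F G y (k y) *v \<theta>) = (dV y v* phi F G y (k y)) \<bullet> \<theta>"
      by (simp add: dot_lmul_matrix)
    also have "\<dots> = lam \<bullet> (A *v \<theta>)" using lam(3) by (metis dot_lmul_matrix)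
    also have "\<dots> \<le> lam \<bullet> b"
      unfolding inner_vec_def
      by (rule sum_mono) (simp add: lam(1) thA mult_left_mono)
    finally have "dV y \<bullet> (phi F G y (k y) *v \<theta>) \<le> b \<bullet> lam" by (simp add: inner_commute)
    then show ?thesis using lam(2) unfolding H_def by (simp add: inner_add_right)
  qed
  have gnn: "\<gamma> s \<ge> 0" if "s \<ge> 0" for s using gamma_K that by (simp add: class_K_def)
  have L2: "dV y \<bullet> H y \<le> 0" if "y \<in> D" for y
    using L1[OF that] gnn[of "V y"] V_nonneg by force
  obtain r where r: "r > 0" "cball 0 r \<subseteq> D" using D_open D0 open_contains_cball by blast
  have contx: "continuous_on {0..T} x" if "is_sol H x {0..T}" for x T
    using that unfolding is_sol_def
    by (meson continuous_on_eq_continuous_within has_vector_derivative_continuous)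
  have stab: "\<exists>\<delta>>0. \<forall>x T. T \<ge> 0 \<and> is_sol H x {0..T} \<and> norm (x 0) < \<delta>
                 \<longrightarrow> (\<forall>t\<in>{0..T}. norm (x t) < min \<epsilon> r)" if "\<epsilon> > 0" for \<epsilon>
  proof -
    define e1 where "e1 = min \<epsilon> r"
    have e1: "e1 > 0" "e1 \<le> r" using that r by (auto simp: e1_def)
    obtain m where m: "m > 0" "\<forall>y. e1 \<le> norm y \<and> norm y \<le> r \<longrightarrow> m \<le> V y"
      using pos_lower[OF contV Vpos e1(1)] by blast
    obtain d where d: "d > 0" "\<forall>y. dist y 0 < d \<longrightarrow> dist (V y) (V 0) < m"
      using contV m(1) unfolding continuous_on_iff by blast
    have dV0: "V y < m" if "norm y < d" for y using d that V_nonneg V00 by (auto simp: dist_norm)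
    show ?thesis
    proof (intro exI[of _ "min d e1"] conjI allI impI ballI)
      show "min d e1 > 0" using d e1 by simp
      fix x T t assume as: "0 \<le> T \<and> is_sol H x {0..T} \<and> norm (x 0) < min d e1" "t \<in> {0..T}"
      have cx: "continuous_on {0..T} x" using contx as by blast
      have cn: "continuous_on {0..T} (\<lambda>t. norm (x t))" by (intro continuous_intros cx)
      show "norm (x t) < min \<epsilon> r"
      proof (rule ccontr)
        assume "\<not> ?thesis"
        then have "e1 \<le> norm (x t)" by (auto simp: e1_def min_def split: if_splits)
        from first_exit[OF cn _ as(2) this] as obtain s where s: "s \<in> {0..T}" "norm (x s) = e1"
          "\<forall>\<tau>\<in>{0..<s}. norm (x \<tau>) < e1" by auto
        have "V (x s) - V (x 0) \<le> 0 * (s - 0)"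
        proof (rule decr_bound)
          show "0 \<le> s" using s by simp
          show "continuous_on {0..s} (\<lambda>t. V (x t))"
            using s by (intro continuous_on_compose2[OF contV] continuous_on_subset[OF cx]) auto
        next
          fix \<tau> assume t: "0 < \<tau>" "\<tau> < s"
          have "\<tau> \<in> interior {0..T}" using t s by simp
          then have "at \<tau> within {0..T} = at \<tau>" by (rule at_within_interior)
          moreover have "(x has_vector_derivative H (x \<tau>)) (at \<tau> within {0..T})"
            using as t s unfolding is_sol_def by auto
          ultimately show "((\<lambda>t. V (x t)) has_real_derivative dV (x \<tau>) \<bullet> H (x \<tau>)) (at \<tau>)"
            using chain_V[OF V_deriv] by metis
          have "norm (x \<tau>) < e1" using s(3) t by auto
          then have "x \<tau> \<in> cball 0 r" using e1 by simp
          then have "x \<tau> \<in> D" using r by blast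
          then show "dV (x \<tau>) \<bullet> H (x \<tau>) \<le> 0" by (rule L2)
        qed
        moreover have "V (x 0) < m" using dV0 as by simp
        moreover have "m \<le> V (x s)" using m(2) s(2) e1 by simp
        ultimately show False by simp
      qed
    qed
  qed
  have part2: "\<exists>\<eta>>0. \<forall>x. is_sol H x {0..} \<and> norm (x 0) < \<eta> \<longrightarrow> (x \<longlongrightarrow> 0) at_top"
  proof -
    obtain \<eta> where eta: "\<eta> > 0" "\<forall>x T. T \<ge> 0 \<and> is_sol H x {0..T} \<and> norm (x 0) < \<eta>
                 \<longrightarrow> (\<forall>t\<in>{0..T}. norm (x t) < min r r)" using stab[OF r(1)] by blast
    show ?thesis
    proof (intro exI[of _ \<eta>] conjI allI impI)
      show "\<eta> > 0" by fact
      fix x assume as: "is_sol H x {0..} \<and> norm (x 0) < \<eta>"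
      have solT: "is_sol H x {0..T}" for T
        using as unfolding is_sol_def
        by (meson atLeastAtMost_iff atLeast_iff atLeastatMost_subset_iff has_vector_derivative_within_subset
             order_refl subsetI)
      have inr: "norm (x t) < r" if "t \<ge> 0" for t
        using eta(2) solT[of t] as that by auto
      have inD: "x t \<in> D" if "t \<ge> 0" for t
      proof -
        have "x t \<in> cball 0 r" using inr[OF that] by simp
        then show ?thesis using r by blast
      qed
      define v where "v t = V (x t)" for t
      have cv: "continuous_on {a..b} v" if "0 \<le> a" for a b
      proof -
        have "continuous_on {0..max a b} x" using contx solT by blast
        then have "continuous_on {a..b} x" by (rule continuous_on_subset) (use that in auto)
        then show ?thesis unfolding v_def by (intro continuous_on_compose2[OF contV]) auto
      qed
      have dv: "(v has_real_derivative dV (x t) \<bullet> H (x t)) (at t)" if "t > 0" for t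
      proof -
        have "t \<in> interior {0..}" using that by simp
        then have "at t within {0..} = at t" by (rule at_within_interior)
        moreover have "(x has_vector_derivative H (x t)) (at t within {0..})"
          using as that unfolding is_sol_def by auto
        ultimately show ?thesis unfolding v_def using chain_V[OF V_deriv] by metis
      qed
      have mono: "v b \<le> v a" if "0 \<le> a" "a \<le> b" for a b
      proof -
        have "v b - v a \<le> 0 * (b - a)"
          by (rule decr_bound[OF that(2) cv[OF that(1)] dv]) (use that L2 inD in auto)
        then show ?thesis by simp
      qed
      have smono: "strict_mono_on {0..} \<gamma>" and g0: "\<gamma> 0 = 0" using gamma_K by (auto simp: class_K_def)
      have Vlim: "\<exists>t0\<ge>0. \<forall>t\<ge>t0. v t < e" if "e > 0" for e
      proof -
        have ge: "\<gamma> e > 0" using strict_mono_onD[OF smono, of 0 e] that g0 by auto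
        define t0 where "t0 = v 0 / \<gamma> e + 1"
        have v0: "v 0 \<ge> 0" using V_nonneg v_def by simp
        have t0: "t0 > 0" using v0 ge by (simp add: t0_def add_nonneg_pos)
        have "v t0 < e"
        proof (rule ccontr)
          assume "\<not> ?thesis"
          then have big: "v s \<ge> e" if "0 \<le> s" "s \<le> t0" for s using mono[OF that] by simp
          have "v t0 - v 0 \<le> (- \<gamma> e) * (t0 - 0)"
          proof (rule decr_bound[OF _ cv dv])
            fix s assume s: "0 < s" "s < t0"
            have "\<gamma> e \<le> \<gamma> (v s)"
              using strict_mono_on_leD[OF smono, of e "v s"] big[of s] s that by auto
            then show "dV (x s) \<bullet> H (x s) \<le> - \<gamma> e" using L1[OF inD[of s]] s v_def by force
          qed (use t0 in auto)
          also have "\<dots> = - v 0 - \<gamma> e" using ge by (simp add: t0_def algebra_simps)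
          finally have "v t0 < 0" using ge by simp
          then show False using V_nonneg v_def by (metis not_le)
        qed
        then show ?thesis using mono t0 by (intro exI[of _ t0]) (meson le_less_trans less_imp_le)
      qed
      show "(x \<longlongrightarrow> 0) at_top"
        unfolding tendsto_iff eventually_at_top_linorder
      proof (intro allI impI)
        fix e :: real assume e: "e > 0"
        define e1 where "e1 = min e r"
        have e1: "e1 > 0" using e r by (simp add: e1_def)
        obtain m where m: "m > 0" "\<forall>y. e1 \<le> norm y \<and> norm y \<le> r \<longrightarrow> m \<le> V y"
          using pos_lower[OF contV Vpos e1] by blast
        obtain t0 where t0: "t0 \<ge> 0" "\<forall>t\<ge>t0. v t < m" using Vlim[OF m(1)] by blast
        have "norm (x t) < e1" if "t \<ge> t0" for t
        proof (rule ccontr)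
          assume "\<not> ?thesis"
          then have "m \<le> V (x t)" using m(2) inr[of t] that t0 by force
          then show False using t0(2) that v_def by force
        qed
        then show "\<exists>N. \<forall>n\<ge>N. dist (x n) 0 < e" using e1_def by (intro exI[of _ t0]) auto
      qed
    qed
  qed
  show ?thesis unfolding asymp_stable_def H_def[symmetric]
  proof (intro conjI allI impI part2)
    fix \<epsilon> :: real assume "\<epsilon> > 0"
    from stab[OF this] show "\<exists>\<delta>>0. \<forall>x T. 0 \<le> T \<and> is_sol H x {0..T} \<and> norm (x 0) < \<delta>
                       \<longrightarrow> (\<forall>t\<in>{0..T}. norm (x t) < \<epsilon>)" by force
  qed
qed

end
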